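(* Let $\alpha,\beta,p,q\in\mathbb{C}$ be constants with $p^2\neq q^2$, and set $s^2=\alpha^2-p^2$, $\mu^2=\alpha^2-q^2$, $t^2=\beta^2-p^2$, $\nu^2=\beta^2-q^2$. Let $h,g:\mathbb{Z}^2\to\mathbb{C}$ satisfy $\widehat{h}-\widetilde{h}=\widetilde{\widetilde{g}}-g$ and $(h+\widetilde g)g=\beta^2-\alpha^2$. Let $\varphi$ solve $$\widetilde{\widetilde{\varphi}}+h\,\widetilde{\varphi}+\alpha^2\varphi=p^2\varphi,\qquad \widehat{\varphi}=\widetilde{\varphi}-g\,\varphi,$$ and $\phi$ solve $$\widetilde{\widetilde{\phi}}+h\,\widetilde{\phi}+\alpha^2\phi=q^2\phi,\qquad \widehat{\phi}=\widetilde{\phi}-g\,\phi .$$ Then $y=\varphi\widetilde{\phi}-\phi\widetilde{\varphi}$ solves the leKdV-II equation $$s^2\mu^2\,y\widehat{y}+\widetilde{y}\,\widehat{\widetilde{y}}-t^2\nu^2\,y\widetilde{y}-\widehat{y}\,\widehat{\widetilde{y}}-(\alpha^2-\beta^2)\big(y\,\widehat{\widetilde{y}}+\widetilde{y}\,\widehat{y}\big)=0 .$$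
   Context: Shift notation: for a function $f$ on $\mathbb{Z}^2$ (variables $n,m$), $\widetilde f(n,m)=f(n+1,m)$, $\widehat f(n,m)=f(n,m+1)$, and combined accents denote composed shifts. *)

theory Defs
  imports Complex_Main
begin

text \<open>Functions on Z^2 are modelled as int => int => complex; f n m.
  Tilde shift: n+1; hat shift: m+1.\<close>

end

theory Submission
  imports Defs
begin

theorem proposition4p1:
  fixes \<alpha> \<beta> p q :: complex
    and h g \<phi>1 \<phi>2 :: "int \<Rightarrow> int \<Rightarrow> complex"
  assumes pq: "p^2 \<noteq> q^2"
    and hg1: "\<And>n m. h n (m+1) - h (n+1) m = g (n+2) m - g n m"
    and hg2: "\<And>n m. (h n m + g (n+1) m) * g n m = \<beta>^2 - \<alpha>^2"
    and L1: "\<And>n m. \<phi>1 (n+2) m + h n m * \<phi>1 (n+1) m + \<alpha>^2 * \<phi>1 n m = p^2 * \<phi>1 n m"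
    and M1: "\<And>n m. \<phi>1 n (m+1) = \<phi>1 (n+1) m - g n m * \<phi>1 n m"
    and L2: "\<And>n m. \<phi>2 (n+2) m + h n m * \<phi>2 (n+1) m + \<alpha>^2 * \<phi>2 n m = q^2 * \<phi>2 n m"
    and M2: "\<And>n m. \<phi>2 n (m+1) = \<phi>2 (n+1) m - g n m * \<phi>2 n m"
  shows "let y = (\<lambda>n m. \<phi>1 n m * \<phi>2 (n+1) m - \<phi>2 n m * \<phi>1 (n+1) m);
             s2 = \<alpha>^2 - p^2; \<mu>2 = \<alpha>^2 - q^2; t2 = \<beta>^2 - p^2; \<nu>2 = \<beta>^2 - q^2
         in \<forall>n m. s2 * \<mu>2 * y n m * y n (m+1) + y (n+1) m * y (n+1) (m+1)
                  - t2 * \<nu>2 * y n m * y (n+1) m - y n (m+1) * y (n+1) (m+1)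
                  - (\<alpha>^2 - \<beta>^2) * (y n m * y (n+1) (m+1) + y (n+1) m * y n (m+1)) = 0"

proof -
  define y where "y = (\<lambda>n m. \<phi>1 n m * \<phi>2 (n+1) m - \<phi>2 n m * \<phi>1 (n+1) m)"
  have key: "(\<alpha>^2 - p^2) * (\<alpha>^2 - q^2) * y n m * y n (m+1) + y (n+1) m * y (n+1) (m+1)
                  - (\<beta>^2 - p^2) * (\<beta>^2 - q^2) * y n m * y (n+1) m - y n (m+1) * y (n+1) (m+1)
                  - (\<alpha>^2 - \<beta>^2) * (y n m * y (n+1) (m+1) + y (n+1) m * y n (m+1)) = 0" for n m
  proof -
    have yt: "y (n+1) m' = (\<alpha>^2 - p^2) * \<phi>1 n m' * \<phi>2 (n+1) m' - (\<alpha>^2 - q^2) * \<phi>2 n m' * \<phi>1 (n+1) m'" for m'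
    proof -
      have e1: "\<phi>1 (n+1+1) m' = (p^2 - \<alpha>^2) * \<phi>1 n m' - h n m' * \<phi>1 (n+1) m'"
        using L1[of n m'] by (simp add: algebra_simps add.assoc)
      have e2: "\<phi>2 (n+1+1) m' = (q^2 - \<alpha>^2) * \<phi>2 n m' - h n m' * \<phi>2 (n+1) m'"
        using L2[of n m'] by (simp add: algebra_simps add.assoc)
      show ?thesis unfolding y_def e1 e2 by (simp add: algebra_simps)
    qed
    have nn: "n+1+1 = n+2" by simp
    have f1: "\<phi>1 (n+1) (m+1) = (p^2 - \<alpha>^2) * \<phi>1 n m - (h n m + g (n+1) m) * \<phi>1 (n+1) m"
      proof -
      have a1: "\<phi>1 (n+2) m = (p^2-\<alpha>^2)*\<phi>1 n m - h n m*\<phi>1 (n+1) m" using L1[of n m] by (simp add: algebra_simps)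
      show ?thesis unfolding M1[of "n+1" m, unfolded nn] a1 by (simp add: algebra_simps)
    qed
    have f2: "\<phi>2 (n+1) (m+1) = (q^2 - \<alpha>^2) * \<phi>2 n m - (h n m + g (n+1) m) * \<phi>2 (n+1) m"
      proof -
      have a1: "\<phi>2 (n+2) m = (q^2-\<alpha>^2)*\<phi>2 n m - h n m*\<phi>2 (n+1) m" using L2[of n m] by (simp add: algebra_simps)
      show ?thesis unfolding M2[of "n+1" m, unfolded nn] a1 by (simp add: algebra_simps)
    qed
    have b2: "\<beta>^2 = \<alpha>^2 + (h n m + g (n+1) m) * g n m" using hg2[of n m] by (simp add: algebra_simps)
    have yh: "y n (m+1) = (\<phi>1 (n+1) m - g n m * \<phi>1 n m) * ((q^2 - \<alpha>^2) * \<phi>2 n m - (h n m + g (n+1) m) * \<phi>2 (n+1) m)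
       - (\<phi>2 (n+1) m - g n m * \<phi>2 n m) * ((p^2 - \<alpha>^2) * \<phi>1 n m - (h n m + g (n+1) m) * \<phi>1 (n+1) m)"
      by (simp only: y_def f1 f2 M1[of n m] M2[of n m])
    have yht: "y (n+1) (m+1) = (\<alpha>^2 - p^2) * (\<phi>1 (n+1) m - g n m * \<phi>1 n m) * ((q^2 - \<alpha>^2) * \<phi>2 n m - (h n m + g (n+1) m) * \<phi>2 (n+1) m)
       - (\<alpha>^2 - q^2) * (\<phi>2 (n+1) m - g n m * \<phi>2 n m) * ((p^2 - \<alpha>^2) * \<phi>1 n m - (h n m + g (n+1) m) * \<phi>1 (n+1) m)"
      by (simp only: yt f1 f2 M1[of n m] M2[of n m])
    have y0: "y n m = \<phi>1 n m * \<phi>2 (n+1) m - \<phi>2 n m * \<phi>1 (n+1) m" unfolding y_def ..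
    show ?thesis unfolding yt[of m] yh yht y0 b2 by algebra
  qed
  show ?thesis unfolding Let_def y_def[symmetric] using key by blast
qed

end
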